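(* Let $N \geq 1$ and $0 \leq M < N$ be integers, let $\lambda(t) > 0$, and let $\mathbf{X}_t = \sum_{i=1}^N X_t^i \geq 0$ be the (deterministic) sum of the measurements $X_t^1,\dots,X_t^N$ of $N$ users in time slot $t$. Each user $i$ releases $\hat{X}_t^i = X_t^i + \mathcal{G}_1^{(i)} - \mathcal{G}_2^{(i)}$, where the $2N$ random variables $\mathcal{G}_1^{(1)},\mathcal{G}_2^{(1)},\dots,\mathcal{G}_1^{(N)},\mathcal{G}_2^{(N)}$ are mutually independent and each is distributed as $\mathcal{G}(N-M,\lambda(t))$. Let $\hat{\mathbf{X}}_t = \sum_{i=1}^N \hat{X}_t^i$, $\delta_t = \frac{|\mathbf{X}_t - \hat{\mathbf{X}}_t|}{\mathbf{X}_t + 1}$, $\mu(t) = \mathbb{E}(\delta_t)$ and $\sigma(t) = \sqrt{\mathit{Var}(\delta_t)}$. Let $\alpha = M/N$ (so $\alpha<1$). Then $$\mu(t) \leq \frac{2}{B(1/2,\frac{1}{1-\alpha})} \cdot \frac{\lambda(t)}{\mathbf{X}_t + 1}$$ and $$\sigma(t) \leq \sqrt{\frac{2}{1-\alpha} - \frac{4}{B(1/2,\frac{1}{1-\alpha})^2}} \cdot \frac{\lambda(t)}{\mathbf{X}_t + 1},$$ where $B(x,y) = \frac{\Gamma(x)\Gamma(y)}{\Gamma(x+y)}$ is the beta function.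
   Context: For real $n>0$ and $\lambda>0$, $\mathcal{G}(n,\lambda)$ denotes the gamma distribution with probability density $g(x,n,\lambda) = \frac{(1/\lambda)^{1/n}}{\Gamma(1/n)} x^{\frac{1}{n}-1} e^{-x/\lambda}$ for $x \geq 0$ (i.e., shape parameter $1/n$ and scale parameter $\lambda$). Expectation and variance are taken over the randomness of the gamma noise. *)

theory Defs
  imports "HOL-Probability.Probability"
begin

text \<open>Density of the gamma distribution G(n, lambda) of the paper:
  shape 1/n, scale lambda; zero for negative arguments.\<close>
definition gamma_density :: "real \<Rightarrow> real \<Rightarrow> real \<Rightarrow> real" where
  "gamma_density n lam x =
     (if x \<ge> 0 then (1 / lam) powr (1 / n) / Gamma (1 / n) * x powr (1 / n - 1) * exp (- x / lam)
      else 0)"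

end

theory Submission
  imports Defs
begin

definition gd :: "real \<Rightarrow> real \<Rightarrow> real \<Rightarrow> real" where
  "gd a l x = (if 0 \<le> x then x powr (a - 1) * exp (- x / l) / (Gamma a * l powr a) else 0)"

lemma gamma_density_gd:
  assumes "n > 0" "l > 0"
  shows "gamma_density n l x = gd (1/n) l x"
  using assms by (simp add: gamma_density_def gd_def powr_divide)

lemma gd_measurable[measurable]: "gd a l \<in> borel_measurable borel"
  unfolding gd_def by measurable

lemma Gamma_pos_real: "(s::real) > 0 \<Longrightarrow> Gamma s > 0"
  by (rule Gamma_real_pos)

lemma gd_nonneg: "a > 0 \<Longrightarrow> l > 0 \<Longrightarrow> 0 \<le> gd a l x"
  by (auto simp: gd_def intro!: divide_nonneg_pos mult_pos_pos Gamma_real_pos)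

lemma gamma_int:
  assumes s: "s > 0" and l: "l > 0"
  shows "(\<integral>\<^sup>+x. ennreal (indicator {0..} x * x powr (s - 1) * exp (- x / l)) \<partial>lborel)
         = ennreal (l powr s * Gamma s)"
proof -
  have "(\<integral>\<^sup>+x. ennreal (indicator {0..} x * x powr (s - 1) * exp (- x / l)) \<partial>lborel)
     = ennreal l * (\<integral>\<^sup>+x. ennreal (indicator {0..} (0 + l * x) * (0 + l * x) powr (s - 1) * exp (- (0 + l * x) / l)) \<partial>lborel)"
    using l by (subst nn_integral_real_affine[where c = l and t = 0]) auto
  also have "\<dots> = ennreal l * (\<integral>\<^sup>+x. ennreal (l powr (s - 1)) * ennreal (indicator {0..} x * x powr (s - 1) / exp x) \<partial>lborel)"
    using l by (intro arg_cong2[where f="(*)"] refl nn_integral_cong)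
      (auto simp: indicator_def powr_mult ennreal_mult[symmetric] exp_minus field_simps zero_le_mult_iff)
  also have "\<dots> = ennreal l * (ennreal (l powr (s - 1)) * ennreal (Gamma s))"
    using s by (subst nn_integral_cmult) (auto simp: Gamma_conv_nn_integral_real)
  also have "\<dots> = ennreal (l powr s * Gamma s)"
    using l s by (simp add: ennreal_mult[symmetric] Gamma_real_pos less_imp_le powr_diff mult.assoc)
  finally show ?thesis .
qed

lemma gd_moment:
  assumes s: "s > 0" and l: "l > 0" and sp: "s + p > 0"
  shows "(\<integral>\<^sup>+x. ennreal (gd s l x * x powr p) \<partial>lborel) = ennreal (l powr p * Gamma (s + p) / Gamma s)"
proof -
  have "(\<integral>\<^sup>+x. ennreal (gd s l x * x powr p) \<partial>lborel)
     = (\<integral>\<^sup>+x. ennreal (1 / (Gamma s * l powr s)) * ennreal (indicator {0..} x * x powr (s + p - 1) * exp (- x / l)) \<partial>lborel)"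
    using s l by (intro nn_integral_cong)
      (auto simp: gd_def indicator_def ennreal_mult[symmetric] powr_add[symmetric] Gamma_real_pos less_imp_le algebra_simps)
  also have "\<dots> = ennreal (1 / (Gamma s * l powr s)) * ennreal (l powr (s + p) * Gamma (s + p))"
    using sp l gamma_int[OF sp l] by (subst nn_integral_cmult) auto
  also have "\<dots> = ennreal (l powr p * Gamma (s + p) / Gamma s)"
    using s l sp by (simp add: ennreal_mult[symmetric] Gamma_real_pos less_imp_le powr_add)
  finally show ?thesis .
qed

lemma nn_integral_gd:
  assumes s: "s > 0" and l: "l > 0"
  shows "(\<integral>\<^sup>+x. ennreal (gd s l x) \<partial>lborel) = 1"
proof -
  have "(\<integral>\<^sup>+x. ennreal (gd s l x) \<partial>lborel) = (\<integral>\<^sup>+x. ennreal (gd s l x * x powr 0) \<partial>lborel)"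
    by (intro nn_integral_cong) (auto simp: gd_def)
  also have "\<dots> = 1" using gd_moment[OF s l, of 0] s l Gamma_real_pos[OF s] by simp
  finally show ?thesis .
qed

lemma prob_space_gd:
  assumes s: "s > 0" and l: "l > 0"
  shows "prob_space (density lborel (gd s l))"
proof
  show "emeasure (density lborel (gd s l)) (space (density lborel (gd s l))) = 1"
    using nn_integral_gd[OF s l] by (simp add: emeasure_density)
qed

lemma conv_pt:
  assumes x: "x > 0" and t: "0 \<le> t" "t \<le> 1" and l: "l > 0"
  shows "gd a l (x - x*t) * gd b l (x*t) =
    x powr (a + b - 2) * exp (- x / l) / (Gamma a * l powr a * Gamma b * l powr b) *
    ((1 - t) powr (a - 1) * t powr (b - 1))"
proof -
  have e1: "x - x*t = x * (1 - t)" by (simp add: algebra_simps)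
  have p1: "(x * (1 - t)) powr (a - 1) = x powr (a - 1) * (1 - t) powr (a - 1)"
    using x t by (auto intro: powr_mult)
  have p2: "(x * t) powr (b - 1) = x powr (b - 1) * t powr (b - 1)"
    using x t by (auto intro: powr_mult)
  have p3: "x powr (a - 1) * x powr (b - 1) = x powr (a + b - 2)"
    by (simp add: powr_add[symmetric])
  have ex: "exp (- (x * (1 - t)) / l) * exp (- (x * t) / l) = exp (- x / l)"
    using l by (simp add: exp_add[symmetric] field_simps)
  have "gd a l (x - x*t) * gd b l (x*t) =
     ((x * (1 - t)) powr (a - 1) * exp (- (x * (1 - t)) / l) / (Gamma a * l powr a)) *
     ((x * t) powr (b - 1) * exp (- (x * t) / l) / (Gamma b * l powr b))"
    using x t unfolding e1 gd_def by auto
  also have "\<dots> = (x powr (a - 1) * x powr (b - 1)) * (exp (- (x * (1 - t)) / l) * exp (- (x * t) / l))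
      / (Gamma a * l powr a * Gamma b * l powr b) * ((1 - t) powr (a - 1) * t powr (b - 1))"
    unfolding p1 p2 by (simp add: field_simps)
  also have "\<dots> = x powr (a + b - 2) * exp (- x / l) / (Gamma a * l powr a * Gamma b * l powr b) *
    ((1 - t) powr (a - 1) * t powr (b - 1))"
    unfolding p3 ex ..
  finally show ?thesis .
qed

lemma conv_const:
  assumes x: "x > 0" and l: "l > 0" and a: "a > 0" and b: "b > 0"
  shows "x * (x powr (a + b - 2) * exp (- x / l) / (Gamma a * l powr a * Gamma b * l powr b))
     = Gamma (a + b) / (Gamma a * Gamma b) * gd (a + b) l x"
proof -
  have "x powr (a + b - 1) = x powr ((a + b - 2) + 1)" by simp
  also have "\<dots> = x * x powr (a + b - 2)" by (subst powr_add) (use x in simp)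
  finally have "x * x powr (a + b - 2) = x powr (a + b - 1)" by simp
  moreover have "l powr a * l powr b = l powr (a + b)" by (simp add: powr_add)
  moreover have g1: "Gamma (a + b) > 0" by (rule Gamma_real_pos) (use a b in simp)
  moreover have g2: "Gamma a > 0" by (rule Gamma_real_pos) (use a in simp)
  moreover have g3: "Gamma b > 0" by (rule Gamma_real_pos) (use b in simp)
  ultimately show ?thesis using x l a b
    by (simp add: gd_def field_simps del: Gamma_real_pos)
qed

lemma convolution_gd:
  assumes a: "a > 0" and b: "b > 0" and l: "l > 0"
  shows "(\<lambda>x. \<integral>\<^sup>+y. ennreal (gd a l (x - y)) * ennreal (gd b l y) \<partial>lborel) = (\<lambda>x. ennreal (gd (a + b) l x))"
    (is "?LHS = ?RHS")
proof -
  let ?I = "\<integral>\<^sup>+t. ennreal ((1 - t) powr (a - 1) * t powr (b - 1) * indicator {0..1} t) \<partial>lborel"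
  let ?K = "Gamma (a + b) / (Gamma a * Gamma b)"
  have zero: "?LHS x = 0" "gd (a + b) l x = 0" if "x \<le> 0" for x
  proof -
    have *: "ennreal (gd a l (x - y)) * ennreal (gd b l y) = 0" for y
      using that by (cases "y \<le> 0") (auto simp: gd_def)
    have "(\<lambda>y. ennreal (gd a l (x - y)) * ennreal (gd b l y)) = (\<lambda>y. 0)" using * by auto
    then show "?LHS x = 0" by simp
    show "gd (a + b) l x = 0" using that by (auto simp: gd_def)
  qed
  have pos: "?LHS x = ennreal ?K * ?I * ennreal (gd (a + b) l x)" if x: "x > 0" for x
  proof -
    let ?c = "x powr (a + b - 2) * exp (- x / l) / (Gamma a * l powr a * Gamma b * l powr b)"
    have "?LHS x = (\<integral>\<^sup>+y. ennreal (gd a l (x - y) * gd b l y * indicator {0..x} y) \<partial>lborel)"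
      using a b l by (intro nn_integral_cong)
        (auto simp: gd_def indicator_def ennreal_mult[symmetric] intro!: gd_nonneg)
    also have "\<dots> = ennreal x * (\<integral>\<^sup>+t. ennreal (gd a l (x - (0 + x*t)) * gd b l (0 + x*t) * indicator {0..x} (0 + x*t)) \<partial>lborel)"
      using x by (subst nn_integral_real_affine[where c = x and t = 0]) auto
    also have "\<dots> = ennreal x * (\<integral>\<^sup>+t. ennreal ?c * ennreal ((1 - t) powr (a - 1) * t powr (b - 1) * indicator {0..1} t) \<partial>lborel)"
    proof (intro arg_cong2[where f="(*)"] refl nn_integral_cong)
      fix t :: real
      show "ennreal (gd a l (x - (0 + x*t)) * gd b l (0 + x*t) * indicator {0..x} (0 + x*t)) =
            ennreal ?c * ennreal ((1 - t) powr (a - 1) * t powr (b - 1) * indicator {0..1} t)"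
      proof (cases "0 \<le> t \<and> t \<le> 1")
        case True
        have "0 \<le> ?c" using x l a b Gamma_real_pos[OF a] Gamma_real_pos[OF b] by simp
        moreover have "x * t \<le> x" using True x by (simp add: mult_left_le)
        ultimately show ?thesis using True x l conv_pt[OF x _ _ l, of t a b]
          by (simp add: ennreal_mult[symmetric] indicator_def)
      next
        case False
        then have "indicator {0..x} (x*t) = (0::real)" "indicator {0..1} t = (0::real)"
          using x by (auto simp: indicator_def zero_le_mult_iff mult_le_cancel_left1)
        then show ?thesis by simp
      qed
    qed
    also have "\<dots> = ennreal x * (ennreal ?c * ?I)"
      by (subst nn_integral_cmult) auto
    also have "\<dots> = ennreal (x * ?c) * ?I"
    proof -
      have c0: "0 \<le> ?c" using x l a b Gamma_real_pos[OF a] Gamma_real_pos[OF b] by simp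
      show ?thesis by (subst ennreal_mult[OF less_imp_le[OF x] c0]) (simp add: mult.assoc)
    qed
    also have "\<dots> = ennreal ?K * ?I * ennreal (gd (a + b) l x)"
      unfolding conv_const[OF x l a b]
      using a b l Gamma_real_pos[OF a] Gamma_real_pos[OF b]
      by (subst ennreal_mult) (auto intro!: gd_nonneg simp: mult_ac)
    finally show ?thesis .
  qed
  have "prob_space (density lborel ?LHS)"
  proof (rule prob_space_convolution_density)
    show "prob_space (density lborel (\<lambda>x. ennreal (gd a l x)))" using prob_space_gd[OF a l] by simp
    show "prob_space (density lborel (\<lambda>x. ennreal (gd b l x)))" using prob_space_gd[OF b l] by simp
  qed auto
  then have 2: "integral\<^sup>N lborel ?LHS = 1"
    by (auto dest!: prob_space.emeasure_space_1 simp: emeasure_density)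
  have "1 = integral\<^sup>N lborel ?LHS" using 2 by simp
  also have "\<dots> = (\<integral>\<^sup>+x. ennreal ?K * ?I * ennreal (gd (a + b) l x) \<partial>lborel)"
  proof (intro nn_integral_cong)
    fix x :: real
    show "?LHS x = ennreal ?K * ?I * ennreal (gd (a + b) l x)"
    proof (cases "x > 0")
      case True then show ?thesis by (rule pos)
    next
      case False then have "x \<le> 0" by simp
      then show ?thesis using zero[of x] by simp
    qed
  qed
  also have "\<dots> = ennreal ?K * ?I"
    using nn_integral_gd[of "a + b" l] a b l by (subst nn_integral_cmult) auto
  finally have KI: "ennreal ?K * ?I = 1" by simp
  show ?thesis
  proof
    fix x show "?LHS x = ?RHS x"
      using KI pos[of x] zero[of x] by (cases "x > 0") auto
  qed
qed

lemma (in prob_space) sum_indep_gd: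
  assumes indep: "indep_var borel X borel Y"
  assumes a: "a > 0" and b: "b > 0" and l: "l > 0"
  assumes X: "distributed M lborel X (\<lambda>x. ennreal (gd a l x))"
  assumes Y: "distributed M lborel Y (\<lambda>x. ennreal (gd b l x))"
  shows "distributed M lborel (\<lambda>x. X x + Y x) (\<lambda>x. ennreal (gd (a + b) l x))"
proof -
  have "distributed M lborel (\<lambda>x. X x + Y x) (\<lambda>x. \<integral>\<^sup>+y. ennreal (gd a l (x - y)) * ennreal (gd b l y) \<partial>lborel)"
    by (rule distributed_convolution[OF indep X Y])
  then show ?thesis unfolding convolution_gd[OF a b l] .
qed

lemma (in prob_space) gd_distributed_sum:
  assumes finI: "finite I" and ne: "I \<noteq> {}" and l: "l > 0"
  assumes pos: "\<And>i. i \<in> I \<Longrightarrow> a i > 0"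
  assumes dX: "\<And>i. i \<in> I \<Longrightarrow> distributed M lborel (X i) (\<lambda>x. ennreal (gd (a i) l x))"
  assumes ind: "indep_vars (\<lambda>i. borel) X I"
  shows "distributed M lborel (\<lambda>x. \<Sum>i\<in>I. X i x) (\<lambda>x. ennreal (gd (\<Sum>i\<in>I. a i) l x))"
  using finI ne pos dX ind
proof (induct rule: finite_ne_induct)
  case (singleton i) then show ?case by auto
next
  case (insert i I)
  have "distributed M lborel (\<lambda>x. X i x + (\<Sum>i\<in>I. X i x)) (\<lambda>x. ennreal (gd (a i + (\<Sum>i\<in>I. a i)) l x))"
  proof (rule sum_indep_gd)
    show "indep_var borel (X i) borel (\<lambda>x. \<Sum>i\<in>I. X i x)"
      using insert by (intro indep_vars_sum) auto
    show "a i > 0" using insert by auto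
    show "(\<Sum>i\<in>I. a i) > 0" using insert by (intro sum_pos) auto
    show "distributed M lborel (X i) (\<lambda>x. ennreal (gd (a i) l x))" using insert by auto
    show "distributed M lborel (\<lambda>x. \<Sum>i\<in>I. X i x) (\<lambda>x. ennreal (gd (\<Sum>i\<in>I. a i) l x))"
      using insert by (auto intro: indep_vars_subset)
  qed (rule l)
  then show ?case using insert by simp
qed

lemma deriv_P:
  fixes z k x :: real
  assumes x: "0 < x" "x < z" and k: "k > 0"
  shows "((\<lambda>x. (x * (z - x)) powr k / k) has_real_derivative
            (x powr (k - 1) * (z - x) powr (k - 1) * (z - 2 * x))) (at x)"
proof -
  have g: "((\<lambda>x. x * (z - x)) has_real_derivative (z - 2 * x)) (at x)"
    by (auto intro!: derivative_eq_intros)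
  have pos: "x * (z - x) > 0" using x by simp
  have "((\<lambda>x. (x * (z - x)) powr k) has_real_derivative (k * (x * (z - x)) powr (k - 1)) * (z - 2 * x)) (at x)"
    using DERIV_chain2[OF has_real_derivative_powr[OF pos, of k] g] .
  then have "((\<lambda>x. (x * (z - x)) powr k / k) has_real_derivative (k * (x * (z - x)) powr (k - 1)) * (z - 2 * x) / k) (at x)"
    by (rule DERIV_cdivide)
  moreover have "(k * (x * (z - x)) powr (k - 1)) * (z - 2 * x) / k = x powr (k - 1) * (z - x) powr (k - 1) * (z - 2 * x)"
    using k x by (simp add: powr_mult)
  ultimately show ?thesis by simp
qed

lemma cont_P:
  fixes k z a b :: real
  assumes k: "k > 0" and ab: "0 \<le> a" "b \<le> z"
  shows "continuous_on {a..b} (\<lambda>x. (x * (z - x)) powr k / k)"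
proof -
  have "continuous_on {a..b} (\<lambda>x. (x * (z - x)) powr k)"
    by (rule continuous_on_powr') (use k ab in \<open>auto intro!: continuous_intros\<close>)
  then show ?thesis by (intro continuous_on_divide continuous_on_const) (use k in auto)
qed

lemma inner_abs_has_integral:
  fixes z k :: real
  assumes z: "z > 0" and k: "k > 0"
  shows "((\<lambda>x. x powr (k - 1) * (z - x) powr (k - 1) * \<bar>2 * x - z\<bar>) has_integral
           2 * ((z/2) * (z/2)) powr k / k) {0..z}"
proof -
  let ?P = "\<lambda>x. (x * (z - x)) powr k / k"
  let ?h = "\<lambda>x. x powr (k - 1) * (z - x) powr (k - 1) * \<bar>2 * x - z\<bar>"
  have "(?h has_integral (?P (z/2) - ?P 0)) {0..z/2}"
  proof (rule fundamental_theorem_of_calculus_interior)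
    show "continuous_on {0..z/2} ?P"
      using k z by (intro cont_P) auto
    fix x assume x: "x \<in> {0<..<z/2}"
    then have "(?P has_real_derivative (x powr (k - 1) * (z - x) powr (k - 1) * (z - 2 * x))) (at x)"
      using deriv_P[OF _ _ k, of x z] by auto
    moreover have "x powr (k - 1) * (z - x) powr (k - 1) * (z - 2 * x) = ?h x"
      using x by (simp add: abs_if)
    ultimately show "(?P has_vector_derivative ?h x) (at x)"
      by (simp add: has_real_derivative_iff_has_vector_derivative)
  qed (use z in simp)
  moreover have "(?h has_integral ((-?P) z - (-?P) (z/2))) {z/2..z}"
  proof (rule fundamental_theorem_of_calculus_interior)
    show "continuous_on {z/2..z} (-?P)"
      unfolding fun_Compl_def
      using k z by (intro continuous_on_minus cont_P) auto
    fix x assume x: "x \<in> {z/2<..<z}"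
    then have "(?P has_real_derivative (x powr (k - 1) * (z - x) powr (k - 1) * (z - 2 * x))) (at x)"
      using deriv_P[OF _ _ k, of x z] z by auto
    then have "((\<lambda>x. - ?P x) has_real_derivative - (x powr (k - 1) * (z - x) powr (k - 1) * (z - 2 * x))) (at x)"
      by (rule DERIV_minus)
    moreover have "- (x powr (k - 1) * (z - x) powr (k - 1) * (z - 2 * x)) = ?h x"
      using x by (simp add: abs_if algebra_simps)
    ultimately show "((-?P) has_vector_derivative ?h x) (at x)"
      by (simp add: has_real_derivative_iff_has_vector_derivative fun_Compl_def)
  qed (use z in simp)
  ultimately have "(?h has_integral ((?P (z/2) - ?P 0) + ((-?P) z - (-?P) (z/2)))) {0..z}"
    by (intro has_integral_combine[of 0 "z/2" z]) (use z in auto)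
  moreover have "(?P (z/2) - ?P 0) + ((-?P) z - (-?P) (z/2)) = 2 * ((z/2) * (z/2)) powr k / k"
    by (simp add: fun_Compl_def)
  ultimately show ?thesis by simp
qed

lemma inner_abs_nn:
  fixes z k :: real
  assumes z: "z > 0" and k: "k > 0"
  shows "(\<integral>\<^sup>+x. ennreal (indicator {0..z} x * (x powr (k - 1) * (z - x) powr (k - 1) * \<bar>2 * x - z\<bar>)) \<partial>lborel)
         = ennreal (2 * ((z/2) * (z/2)) powr k / k)"
  by (rule nn_integral_has_integral_lebesgue[OF _ inner_abs_has_integral[OF z k]]) simp

lemma gd_prod_zero:
  assumes "z \<le> 0"
  shows "gd k l x * gd k l (z - x) = 0"
  using assms by (cases "x \<le> 0") (auto simp: gd_def)

lemma gd_prod_pos: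
  assumes z: "z > 0" and l: "l > 0"
  shows "gd k l x * gd k l (z - x) =
    1 / (Gamma k * l powr k)^2 * exp (- z / l) * (indicator {0..z} x * (x powr (k - 1) * (z - x) powr (k - 1)))"
proof (cases "0 \<le> x \<and> x \<le> z")
  case True
  have "exp (- x / l) * exp (- (z - x) / l) = exp (- z / l)"
    using l by (simp add: exp_add[symmetric] field_simps)
  then show ?thesis using True
    by (simp add: gd_def power2_eq_square field_simps)
next
  case False
  then show ?thesis by (auto simp: gd_def)
qed

lemma inner_z:
  assumes l: "l > 0" and k: "k > 0"
  shows "(\<integral>\<^sup>+x. ennreal (gd k l x * gd k l (z - x) * \<bar>2 * x - z\<bar>) \<partial>lborel) =
    ennreal (1 / (Gamma k * l powr k)^2 * 2 / k * (1/4) powr k *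
       (indicator {0..} z * z powr (2 * k + 1 - 1) * exp (- z / l)))"
proof (cases "z > 0")
  case False
  have eq1: "(\<lambda>x. ennreal (gd k l x * gd k l (z - x) * \<bar>2 * x - z\<bar>)) = (\<lambda>x. 0)"
  proof (rule ext)
    fix x show "ennreal (gd k l x * gd k l (z - x) * \<bar>2 * x - z\<bar>) = 0"
    proof -
      have "gd k l x * gd k l (z - x) = 0" using gd_prod_zero[of z k l x] False by simp
      then show ?thesis by (metis mult_zero_left ennreal_0)
    qed
  qed
  have eq2: "1 / (Gamma k * l powr k)^2 * 2 / k * (1/4) powr k *
       (indicator {0..} z * z powr (2 * k + 1 - 1) * exp (- z / l)) = 0"
    using False by (cases "z = 0") (auto simp: indicator_def)
  show ?thesis unfolding eq1 eq2 by simp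
next
  case z: True
  let ?C = "1 / (Gamma k * l powr k)^2 * exp (- z / l)"
  have C0: "0 \<le> ?C" by simp
  have "(\<integral>\<^sup>+x. ennreal (gd k l x * gd k l (z - x) * \<bar>2 * x - z\<bar>) \<partial>lborel) =
        (\<integral>\<^sup>+x. ennreal ?C * ennreal (indicator {0..z} x * (x powr (k - 1) * (z - x) powr (k - 1) * \<bar>2 * x - z\<bar>)) \<partial>lborel)"
    by (intro nn_integral_cong)
       (simp add: gd_prod_pos[OF z l] ennreal_mult[symmetric] mult.assoc)
  also have "\<dots> = ennreal ?C * ennreal (2 * ((z/2) * (z/2)) powr k / k)"
    by (subst nn_integral_cmult) (auto simp: inner_abs_nn[OF z k])
  also have "\<dots> = ennreal (?C * (2 * ((z/2) * (z/2)) powr k / k))"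
    by (rule ennreal_mult[symmetric]) (use C0 k in auto)
  also have "?C * (2 * ((z/2) * (z/2)) powr k / k) =
     1 / (Gamma k * l powr k)^2 * 2 / k * (1/4) powr k * (indicator {0..} z * z powr (2 * k + 1 - 1) * exp (- z / l))"
  proof -
    have "((z/2) * (z/2)) powr k = (1/4) powr k * (z powr k * z powr k)"
      using z by (simp add: powr_mult[symmetric])
    also have "\<dots> = (1/4) powr k * z powr (2 * k + 1 - 1)"
      by (simp add: powr_add[symmetric])
    finally show ?thesis using z by (simp add: indicator_def)
  qed
  finally show ?thesis .
qed

lemma Gamma_2k1:
  assumes k: "k > 0"
  shows "Gamma (2 * k + 1) = 2 * k * Gamma (2 * k :: real)"
proof -
  have "2 * k \<notin> \<int>\<^sub>\<le>\<^sub>0" using k by (auto dest: nonpos_Ints_nonpos)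
  then show ?thesis by (rule Gamma_plus1)
qed

lemma alg1:
  fixes G L k q l H :: real
  assumes "G \<noteq> 0" "L \<noteq> 0" "k \<noteq> 0"
  shows "1 / (G * L)^2 * 2 / k * q * (L^2 * l * (2 * k * H)) = l * 4 * q * H / G^2"
  using assms by (simp add: field_simps power2_eq_square)

lemma J_abs:
  assumes l: "l > 0" and k: "k > 0"
  shows "(\<integral>\<^sup>+x. \<integral>\<^sup>+y. ennreal (gd k l x * gd k l y * \<bar>x - y\<bar>) \<partial>lborel \<partial>lborel) =
         ennreal (l * 4 * (1/4) powr k * Gamma (2 * k) / (Gamma k)^2)"
proof -
  let ?Cst = "1 / (Gamma k * l powr k)^2 * 2 / k * (1/4) powr k"
  have "(\<integral>\<^sup>+x. \<integral>\<^sup>+y. ennreal (gd k l x * gd k l y * \<bar>x - y\<bar>) \<partial>lborel \<partial>lborel) =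
        (\<integral>\<^sup>+x. \<integral>\<^sup>+z. ennreal (gd k l x * gd k l (z - x) * \<bar>2 * x - z\<bar>) \<partial>lborel \<partial>lborel)"
  proof (rule nn_integral_cong)
    fix x :: real
    have "(\<integral>\<^sup>+y. ennreal (gd k l x * gd k l y * \<bar>x - y\<bar>) \<partial>lborel) =
       ennreal \<bar>1\<bar> * (\<integral>\<^sup>+z. ennreal (gd k l x * gd k l (- x + 1 * z) * \<bar>x - (- x + 1 * z)\<bar>) \<partial>lborel)"
      by (rule nn_integral_real_affine) auto
    also have "\<dots> = (\<integral>\<^sup>+z. ennreal (gd k l x * gd k l (z - x) * \<bar>2 * x - z\<bar>) \<partial>lborel)"
      by (simp add: algebra_simps)
    finally show "(\<integral>\<^sup>+y. ennreal (gd k l x * gd k l y * \<bar>x - y\<bar>) \<partial>lborel) =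
       (\<integral>\<^sup>+z. ennreal (gd k l x * gd k l (z - x) * \<bar>2 * x - z\<bar>) \<partial>lborel)" .
  qed
  also have "\<dots> = (\<integral>\<^sup>+z. \<integral>\<^sup>+x. ennreal (gd k l x * gd k l (z - x) * \<bar>2 * x - z\<bar>) \<partial>lborel \<partial>lborel)"
    by (rule lborel_pair.Fubini'[symmetric]) measurable
  also have "\<dots> = (\<integral>\<^sup>+z. ennreal ?Cst * ennreal (indicator {0..} z * z powr (2 * k + 1 - 1) * exp (- z / l)) \<partial>lborel)"
  proof (rule nn_integral_cong)
    fix z :: real
    show "(\<integral>\<^sup>+x. ennreal (gd k l x * gd k l (z - x) * \<bar>2 * x - z\<bar>) \<partial>lborel) =
      ennreal ?Cst * ennreal (indicator {0..} z * z powr (2 * k + 1 - 1) * exp (- z / l))"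
      unfolding inner_z[OF l k] by (rule ennreal_mult) (use l k in auto)
  qed
  also have "\<dots> = ennreal ?Cst * ennreal (l powr (2 * k + 1) * Gamma (2 * k + 1))"
    using gamma_int[of "2 * k + 1" l] l k by (subst nn_integral_cmult) auto
  also have "\<dots> = ennreal (?Cst * (l powr (2 * k + 1) * Gamma (2 * k + 1)))"
    by (rule ennreal_mult[symmetric]) (use l k in auto)
  also have "?Cst * (l powr (2 * k + 1) * Gamma (2 * k + 1)) = l * 4 * (1/4) powr k * Gamma (2 * k) / (Gamma k)^2"
  proof -
    have g: "Gamma k > 0" using k by simp
    have "l powr (2 * k + 1) = l powr (k + k + 1)"
      by (rule arg_cong[where f="\<lambda>t. l powr t"]) simp
    also have "\<dots> = l powr k * l powr k * l powr 1" by (simp only: powr_add)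
    also have "\<dots> = (l powr k)^2 * l" using l by (simp add: power2_eq_square)
    finally have p: "l powr (2 * k + 1) = (l powr k)^2 * l" .
    have lk: "l powr k > 0" using l by simp
    show ?thesis unfolding Gamma_2k1[OF k] p
      by (rule alg1[OF less_imp_neq[OF g, symmetric] less_imp_neq[OF lk, symmetric]]) (use k in simp)
  qed
  finally show ?thesis .
qed

lemma m1:
  assumes l: "l > 0" and k: "k > 0"
  shows "(\<integral>\<^sup>+y. ennreal (gd k l y * y) \<partial>lborel) = ennreal (k * l)"
proof -
  have "(\<integral>\<^sup>+y. ennreal (gd k l y * y) \<partial>lborel) = (\<integral>\<^sup>+y. ennreal (gd k l y * y powr 1) \<partial>lborel)"
    by (intro nn_integral_cong) (auto simp: gd_def)
  also have "\<dots> = ennreal (l powr 1 * Gamma (k + 1) / Gamma k)"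
    using gd_moment[OF k l, of 1] k by simp
  also have "l powr 1 * Gamma (k + 1) / Gamma k = k * l"
  proof -
    have "k \<notin> \<int>\<^sub>\<le>\<^sub>0" using k by (auto dest: nonpos_Ints_nonpos)
    then have "Gamma (k + 1) = k * Gamma k" by (rule Gamma_plus1)
    moreover have "Gamma k \<noteq> 0" using k by (simp add: less_imp_neq[symmetric])
    ultimately show ?thesis using l by simp
  qed
  finally show ?thesis .
qed

lemma m2:
  assumes l: "l > 0" and k: "k > 0"
  shows "(\<integral>\<^sup>+y. ennreal (gd k l y * y^2) \<partial>lborel) = ennreal (k * (k + 1) * l^2)"
proof -
  have "(\<integral>\<^sup>+y. ennreal (gd k l y * y^2) \<partial>lborel) = (\<integral>\<^sup>+y. ennreal (gd k l y * y powr 2) \<partial>lborel)"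
    by (intro nn_integral_cong) (auto simp: gd_def powr_numeral)
  also have "\<dots> = ennreal (l powr 2 * Gamma (k + 2) / Gamma k)"
    using gd_moment[OF k l, of 2] k by simp
  also have "l powr 2 * Gamma (k + 2) / Gamma k = k * (k + 1) * l^2"
  proof -
    have "k \<notin> \<int>\<^sub>\<le>\<^sub>0" using k by (auto dest: nonpos_Ints_nonpos)
    then have g1: "Gamma (k + 1) = k * Gamma k" by (rule Gamma_plus1)
    have "k + 1 \<notin> \<int>\<^sub>\<le>\<^sub>0" using k by (auto dest: nonpos_Ints_nonpos)
    then have "Gamma (k + 1 + 1) = (k + 1) * Gamma (k + 1)" by (rule Gamma_plus1)
    then have g2: "Gamma (k + 2) = (k + 1) * (k * Gamma k)" using g1 by (simp add: add.assoc)
    moreover have "Gamma k \<noteq> 0" using k by (simp add: less_imp_neq[symmetric])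
    ultimately show ?thesis using l by (simp add: powr_numeral)
  qed
  finally show ?thesis .
qed

lemma ennreal_comb:
  assumes "0 \<le> a" "0 \<le> b" "0 \<le> d"
  shows "ennreal a + ennreal b * ennreal d = ennreal (a + b * d)"
  using assms by (simp add: ennreal_plus ennreal_mult)

lemma m_inner:
  assumes l: "l > 0" and k: "k > 0" and c: "c \<ge> 0"
  shows "(\<integral>\<^sup>+y. ennreal (gd k l y * (c - y)^2) \<partial>lborel) = ennreal ((c - k * l)^2 + k * l^2)"
proof -
  let ?X = "\<integral>\<^sup>+y. ennreal (gd k l y * (c - y)^2) \<partial>lborel"
  have pt: "ennreal (gd k l y * (c - y)^2) + ennreal (2 * c) * ennreal (gd k l y * y) =
            ennreal (c^2) * ennreal (gd k l y) + ennreal (gd k l y * y^2)" for y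
  proof (cases "y \<ge> 0")
    case True
    have g: "gd k l y \<ge> 0" using gd_nonneg[OF k l] .
    then have "ennreal (gd k l y * (c - y)^2) + ennreal (2 * c) * ennreal (gd k l y * y) =
       ennreal (gd k l y * (c - y)^2 + 2 * c * (gd k l y * y))"
      using True c by (intro ennreal_comb) auto
    also have "gd k l y * (c - y)^2 + 2 * c * (gd k l y * y) = c^2 * gd k l y + gd k l y * y^2"
      by (simp add: power2_eq_square algebra_simps)
    also have "ennreal \<dots> = ennreal (gd k l y * y^2) + ennreal (c^2) * ennreal (gd k l y)"
      using g by (subst ennreal_comb) (auto simp: add.commute)
    also have "\<dots> = ennreal (c^2) * ennreal (gd k l y) + ennreal (gd k l y * y^2)"
      by (simp add: add.commute)
    finally show ?thesis .
  next
    case False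
    then have "gd k l y = 0" by (simp add: gd_def)
    then show ?thesis by simp
  qed
  have "?X + ennreal (2 * c) * ennreal (k * l) =
        (\<integral>\<^sup>+y. ennreal (gd k l y * (c - y)^2) + ennreal (2 * c) * ennreal (gd k l y * y) \<partial>lborel)"
    by (subst nn_integral_add) (auto simp: nn_integral_cmult m1[OF l k])
  also have "\<dots> = (\<integral>\<^sup>+y. ennreal (c^2) * ennreal (gd k l y) + ennreal (gd k l y * y^2) \<partial>lborel)"
    by (simp add: pt)
  also have "\<dots> = ennreal (c^2) * 1 + ennreal (k * (k + 1) * l^2)"
    by (subst nn_integral_add) (auto simp: nn_integral_cmult m2[OF l k] nn_integral_gd[OF k l])
  also have "\<dots> = ennreal (c^2 + k * (k + 1) * l^2)"
    using k l by (simp add: ennreal_plus)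
  finally have eq0: "?X + ennreal (2 * c) * ennreal (k * l) = ennreal (c^2 + k * (k + 1) * l^2)" .
  have "ennreal (2 * c) * ennreal (k * l) = ennreal (2 * c * (k * l))"
    by (rule ennreal_mult[symmetric]) (use c k l in auto)
  with eq0 have eq: "?X + ennreal (2 * c * (k * l)) = ennreal (c^2 + k * (k + 1) * l^2)" by simp
  have "?X = ?X + ennreal (2 * c * (k * l)) - ennreal (2 * c * (k * l))"
    by (simp add: ennreal_add_diff_cancel_right)
  also have "\<dots> = ennreal (c^2 + k * (k + 1) * l^2 - 2 * c * (k * l))"
    unfolding eq using c k l by (subst ennreal_minus) auto
  also have "c^2 + k * (k + 1) * l^2 - 2 * c * (k * l) = (c - k * l)^2 + k * l^2"
    by (simp add: power2_eq_square algebra_simps)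
  finally show ?thesis .
qed

lemma J_sq:
  assumes l: "l > 0" and k: "k > 0"
  shows "(\<integral>\<^sup>+x. \<integral>\<^sup>+y. ennreal (gd k l x * gd k l y * (x - y)^2) \<partial>lborel \<partial>lborel) = ennreal (2 * k * l^2)"
proof -
  have kl: "k * l \<ge> 0" using k l by simp
  have "(\<integral>\<^sup>+x. \<integral>\<^sup>+y. ennreal (gd k l x * gd k l y * (x - y)^2) \<partial>lborel \<partial>lborel) =
        (\<integral>\<^sup>+x. ennreal (gd k l x * (k * l - x)^2) + ennreal (k * l^2) * ennreal (gd k l x) \<partial>lborel)"
  proof (rule nn_integral_cong)
    fix x :: real
    show "(\<integral>\<^sup>+y. ennreal (gd k l x * gd k l y * (x - y)^2) \<partial>lborel) =
          ennreal (gd k l x * (k * l - x)^2) + ennreal (k * l^2) * ennreal (gd k l x)"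
    proof (cases "x \<ge> 0")
      case True
      have g: "gd k l x \<ge> 0" using gd_nonneg[OF k l] .
      have "(\<integral>\<^sup>+y. ennreal (gd k l x * gd k l y * (x - y)^2) \<partial>lborel) =
            (\<integral>\<^sup>+y. ennreal (gd k l x) * ennreal (gd k l y * (x - y)^2) \<partial>lborel)"
        using g by (intro nn_integral_cong) (simp add: ennreal_mult gd_nonneg[OF k l] mult.assoc)
      also have "\<dots> = ennreal (gd k l x) * ennreal ((x - k * l)^2 + k * l^2)"
        by (subst nn_integral_cmult) (auto simp: m_inner[OF l k True])
      also have "\<dots> = ennreal (gd k l x * ((x - k * l)^2 + k * l^2))"
        by (rule ennreal_mult[symmetric]) (use g k l in auto)
      also have "gd k l x * ((x - k * l)^2 + k * l^2) = gd k l x * (k * l - x)^2 + k * l^2 * gd k l x"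
        by (simp add: power2_commute algebra_simps)
      also have "ennreal \<dots> = ennreal (gd k l x * (k * l - x)^2) + ennreal (k * l^2) * ennreal (gd k l x)"
        by (rule ennreal_comb[symmetric]) (use g k l in auto)
      finally show ?thesis .
    next
      case False
      then have "gd k l x = 0" by (simp add: gd_def)
      then show ?thesis by simp
    qed
  qed
  also have "\<dots> = ennreal ((k * l - k * l)^2 + k * l^2) + ennreal (k * l^2) * 1"
    by (subst nn_integral_add) (auto simp: nn_integral_cmult m_inner[OF l k kl] nn_integral_gd[OF k l])
  also have "\<dots> = ennreal (k * l^2) + ennreal (k * l^2)" by simp
  also have "\<dots> = ennreal (k * l^2 + k * l^2)"
    by (rule ennreal_plus[symmetric]) (use k l in auto)
  also have "k * l^2 + k * l^2 = 2 * k * l^2" by simp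
  finally show ?thesis .
qed

lemma (in prob_space) indep_var_lborel:
  assumes "indep_var borel X borel Y"
  shows "indep_var lborel X lborel Y"
proof -
  have 1: "case_bool borel borel = (\<lambda>_::bool. borel :: real measure)" by (simp add: fun_eq_iff split: bool.split)
  have 2: "case_bool lborel lborel = (\<lambda>_::bool. lborel :: real measure)" by (simp add: fun_eq_iff split: bool.split)
  show ?thesis using assms unfolding indep_var_def indep_vars_def
    by (simp add: measurable_lborel2 bool.case_eq_if)
qed

lemma sum_single_prod: "(\<Sum>j\<in>{b} \<times> I. f j) = (\<Sum>i\<in>I. f (b, i))"
proof -
  have "{b} \<times> I = (\<lambda>i. (b, i)) ` I" by auto
  moreover have "inj_on (\<lambda>i. (b, i)) I" by (auto simp: inj_on_def)
  ultimately show ?thesis by (simp add: sum.reindex)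
qed

lemma dup_real:
  fixes k :: real
  assumes k: "k > 0"
  shows "Gamma k * Gamma (k + 1/2) = 2 powr (1 - 2 * k) * sqrt pi * Gamma (2 * k)"
proof -
  have h1: "complex_of_real k \<notin> \<int>\<^sub>\<le>\<^sub>0" using k by (auto simp: of_real_in_nonpos_Ints_iff dest: nonpos_Ints_nonpos)
  have h2: "complex_of_real k + 1/2 \<notin> \<int>\<^sub>\<le>\<^sub>0"
  proof -
    have "complex_of_real k + 1/2 = complex_of_real (k + 1/2)" by simp
    moreover have "complex_of_real (k + 1/2) \<notin> \<int>\<^sub>\<le>\<^sub>0"
      by (subst of_real_in_nonpos_Ints_iff) (use k in \<open>auto dest: nonpos_Ints_nonpos\<close>)
    ultimately show ?thesis by metis
  qed
  have "Gamma (complex_of_real k) * Gamma (complex_of_real k + 1/2) =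
     exp ((1 - 2 * complex_of_real k) * of_real (ln 2)) * of_real (sqrt pi) * Gamma (2 * complex_of_real k)"
    by (rule Gamma_legendre_duplication[OF h1 h2])
  also have "Gamma (complex_of_real k) * Gamma (complex_of_real k + 1/2) = complex_of_real (Gamma k * Gamma (k + 1/2))"
  proof -
    have e1: "complex_of_real k + 1/2 = complex_of_real (k + 1/2)" by simp
    show ?thesis unfolding e1 Gamma_complex_of_real by (simp only: of_real_mult)
  qed
  also have "exp ((1 - 2 * complex_of_real k) * of_real (ln 2)) * of_real (sqrt pi) * Gamma (2 * complex_of_real k)
     = complex_of_real (exp ((1 - 2 * k) * ln 2) * sqrt pi * Gamma (2 * k))"
  proof -
    have e1: "(1 - 2 * complex_of_real k) * of_real (ln 2) = of_real ((1 - 2 * k) * ln 2)" by simp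
    have e2: "2 * complex_of_real k = of_real (2 * k)" by simp
    show ?thesis unfolding e1 unfolding e2 Gamma_complex_of_real exp_of_real by (simp only: of_real_mult)
  qed
  finally have "Gamma k * Gamma (k + 1/2) = exp ((1 - 2 * k) * ln 2) * sqrt pi * Gamma (2 * k)"
    by (simp only: of_real_eq_iff)
  also have "exp ((1 - 2 * k) * ln 2) = 2 powr (1 - 2 * k)" by (simp add: powr_def mult.commute)
  finally show ?thesis .
qed

lemma alg2:
  fixes G1 Gh G2 t s :: real
  assumes "G1 * Gh = 2 * t * s * G2" "G1 > 0" "s > 0"
  shows "4 * t * G2 / G1^2 = 2 / (s * G1 / Gh)"
proof -
  have "Gh = 2 * t * s * G2 / G1" using assms by (simp add: field_simps)
  then show ?thesis using assms by (simp add: field_simps power2_eq_square)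
qed

lemma beta_identity:
  fixes k :: real
  assumes k: "k > 0"
  shows "4 * (1/4) powr k * Gamma (2 * k) / (Gamma k)^2 = 2 / Beta (1/2) k"
proof -
  have g: "Gamma k > 0" "Gamma (k + 1/2) > 0" "Gamma (2 * k) > 0" using k by simp_all
  have q: "(1/4::real) powr k = 2 powr (- 2 * k)"
  proof -
    have e: "(2::real) powr (-2) = 1/4" by (simp add: powr_minus)
    have "(1/4::real) powr k = (2 powr (-2)) powr k" by (simp only: e)
    also have "\<dots> = 2 powr (- 2 * k)" by (simp add: powr_powr)
    finally show ?thesis .
  qed
  have "(2::real) powr (1 - 2 * k) = 2 powr (1 + (- 2 * k))"
    by (rule arg_cong[where f="\<lambda>t. 2 powr t"]) simp
  also have "\<dots> = 2 powr 1 * 2 powr (- 2 * k)" by (rule powr_add)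
  also have "\<dots> = 2 * 2 powr (- 2 * k)" by simp
  finally have p: "(2::real) powr (1 - 2 * k) = 2 * 2 powr (- 2 * k)" .
  have B: "Beta (1/2) k = sqrt pi * Gamma k / Gamma (k + 1/2)"
    by (simp add: Beta_def Gamma_one_half_real add.commute)
  have pi: "sqrt pi > 0" by simp
  show ?thesis unfolding B q
    by (rule alg2[OF dup_real[OF k, unfolded p]]) (use g pi in auto)
qed

lemma (in prob_space) joint_nn:
  assumes ind: "indep_var borel S1 borel S2"
  assumes d1: "distributed M lborel S1 (\<lambda>x. ennreal (f x))"
  assumes d2: "distributed M lborel S2 (\<lambda>x. ennreal (f x))"
  assumes fnn: "\<And>x. f x \<ge> 0"
  assumes gm: "(\<lambda>p. g (fst p) (snd p)) \<in> borel_measurable (lborel \<Otimes>\<^sub>M lborel)"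
  assumes gnn: "\<And>x y. g x y \<ge> 0"
  shows "(\<integral>\<^sup>+\<omega>. ennreal (g (S1 \<omega>) (S2 \<omega>)) \<partial>M) =
         (\<integral>\<^sup>+x. \<integral>\<^sup>+y. ennreal (f x * f y * g x y) \<partial>lborel \<partial>lborel)"
proof -
  have J: "distributed M (lborel \<Otimes>\<^sub>M lborel) (\<lambda>x. (S1 x, S2 x)) (\<lambda>(x, y). ennreal (f x) * ennreal (f y))"
    by (rule distributed_joint_indep[OF sigma_finite_lborel sigma_finite_lborel d1 d2 indep_var_lborel[OF ind]])
  have fm[measurable]: "(\<lambda>x. ennreal (f x)) \<in> borel_measurable lborel"
    using distributed_borel_measurable[OF d1] by simp
  have "(\<integral>\<^sup>+\<omega>. ennreal (g (S1 \<omega>) (S2 \<omega>)) \<partial>M) =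
        (\<integral>\<^sup>+p. (\<lambda>(x, y). ennreal (f x) * ennreal (f y)) p * ennreal (g (fst p) (snd p)) \<partial>(lborel \<Otimes>\<^sub>M lborel))"
  proof -
    have gm': "(\<lambda>p. ennreal (g (fst p) (snd p))) \<in> borel_measurable (lborel \<Otimes>\<^sub>M lborel)"
      using gm by (rule measurable_compose) simp
    show ?thesis using distributed_nn_integral[OF J gm'] by simp
  qed
  also have "\<dots> = (\<integral>\<^sup>+x. \<integral>\<^sup>+y. (\<lambda>p. (\<lambda>(x, y). ennreal (f x) * ennreal (f y)) p * ennreal (g (fst p) (snd p))) (x, y) \<partial>lborel \<partial>lborel)"
  proof (rule lborel.nn_integral_fst[symmetric])
    have gm': "(\<lambda>p. ennreal (g (fst p) (snd p))) \<in> borel_measurable (lborel \<Otimes>\<^sub>M lborel)"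
      using gm by (rule measurable_compose) simp
    have fm2: "(\<lambda>(x, y). ennreal (f x) * ennreal (f y)) \<in> borel_measurable (lborel \<Otimes>\<^sub>M lborel)"
      by measurable
    show "(\<lambda>p. (\<lambda>(x, y). ennreal (f x) * ennreal (f y)) p * ennreal (g (fst p) (snd p))) \<in> borel_measurable (lborel \<Otimes>\<^sub>M lborel)"
      using fm2 gm' by (rule borel_measurable_times_ennreal)
  qed
  also have "\<dots> = (\<integral>\<^sup>+x. \<integral>\<^sup>+y. ennreal (f x * f y * g x y) \<partial>lborel \<partial>lborel)"
    using fnn gnn by (simp add: ennreal_mult)
  finally show ?thesis .
qed

theorem theorem2:
  fixes P :: "'a measure" and N M :: nat and lam :: real
    and X :: "nat \<Rightarrow> real" and G1 G2 :: "nat \<Rightarrow> 'a \<Rightarrow> real"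
  assumes "prob_space P"
    and "N \<ge> 1" and "M < N" and "lam > 0"
    and "(\<Sum>i=1..N. X i) \<ge> 0"
    and "prob_space.indep_vars P (\<lambda>_. borel) (\<lambda>(b, i). if b then G1 i else G2 i) (UNIV \<times> {1..N})"
    and "\<forall>i\<in>{1..N}. distributed P lborel (G1 i) (\<lambda>x. ennreal (gamma_density (real (N - M)) lam x))"
    and "\<forall>i\<in>{1..N}. distributed P lborel (G2 i) (\<lambda>x. ennreal (gamma_density (real (N - M)) lam x))"
  defines "Xs \<equiv> \<Sum>i=1..N. X i"
    and "Xhat \<equiv> \<lambda>\<omega>. \<Sum>i=1..N. (X i + G1 i \<omega> - G2 i \<omega>)"
    and "\<alpha> \<equiv> real M / real N"
  shows "prob_space.expectation P (\<lambda>\<omega>. \<bar>Xs - Xhat \<omega>\<bar> / (Xs + 1))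
           \<le> 2 / Beta (1/2) (1 / (1 - \<alpha>)) * (lam / (Xs + 1))
         \<and> sqrt (prob_space.variance P (\<lambda>\<omega>. \<bar>Xs - Xhat \<omega>\<bar> / (Xs + 1)))
           \<le> sqrt (2 / (1 - \<alpha>) - 4 / (Beta (1/2) (1 / (1 - \<alpha>)))\<^sup>2) * (lam / (Xs + 1))"
proof -
  interpret P: prob_space P by (rule assms(1))
  define n0 where "n0 = real (N - M)"
  have n0: "n0 > 0" using assms(3) by (simp add: n0_def)
  define a0 where "a0 = 1 / n0"
  have a0: "a0 > 0" using n0 by (simp add: a0_def)
  define k where "k = real N / n0"
  have k: "k > 0" using assms(2) n0 by (simp add: k_def)
  have ka: "(\<Sum>j\<in>{b} \<times> {1..N}. a0) = k" for b :: bool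
    by (simp add: card_cartesian_product_singleton a0_def k_def)
  define F :: "bool \<times> nat \<Rightarrow> 'a \<Rightarrow> real" where "F = (\<lambda>(b, i). if b then G1 i else G2 i)"
  have ind: "P.indep_vars (\<lambda>_. borel) F (UNIV \<times> {1..N})" using assms(6) unfolding F_def .
  have gdeq: "(\<lambda>x. ennreal (gamma_density (real (N - M)) lam x)) = (\<lambda>x. ennreal (gd a0 lam x))"
    using n0 assms(4) by (simp add: gamma_density_gd a0_def n0_def)
  have dF: "distributed P lborel (F j) (\<lambda>x. ennreal (gd a0 lam x))" if "j \<in> UNIV \<times> {1..N}" for j
  proof (cases j)
    case (Pair b i)
    then show ?thesis using that assms(7,8) unfolding gdeq by (cases b) (auto simp: F_def)
  qed
  have dsum: "distributed P lborel (\<lambda>\<omega>. \<Sum>j\<in>{b} \<times> {1..N}. F j \<omega>) (\<lambda>x. ennreal (gd k lam x))" for b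
  proof -
    have "distributed P lborel (\<lambda>\<omega>. \<Sum>j\<in>{b} \<times> {1..N}. F j \<omega>) (\<lambda>x. ennreal (gd (\<Sum>j\<in>{b} \<times> {1..N}. a0) lam x))"
    proof (rule P.gd_distributed_sum)
      show "finite ({b} \<times> {1..N})" by simp
      show "{b} \<times> {1..N} \<noteq> {}" using assms(2) by auto
      show "P.indep_vars (\<lambda>i. borel) F ({b} \<times> {1..N})"
        by (rule P.indep_vars_subset[OF ind]) auto
    qed (use assms(4) a0 dF in auto)
    then show ?thesis unfolding ka .
  qed
  define S1 where "S1 = (\<lambda>\<omega>. \<Sum>j\<in>{True} \<times> {1..N}. F j \<omega>)"
  define S2 where "S2 = (\<lambda>\<omega>. \<Sum>j\<in>{False} \<times> {1..N}. F j \<omega>)"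
  have dS1: "distributed P lborel S1 (\<lambda>x. ennreal (gd k lam x))" unfolding S1_def by (rule dsum)
  have dS2: "distributed P lborel S2 (\<lambda>x. ennreal (gd k lam x))" unfolding S2_def by (rule dsum)
  have S1_alt: "S1 \<omega> = (\<Sum>i=1..N. G1 i \<omega>)" for \<omega> by (simp add: S1_def sum_single_prod F_def)
  have S2_alt: "S2 \<omega> = (\<Sum>i=1..N. G2 i \<omega>)" for \<omega> by (simp add: S2_def sum_single_prod F_def)
  have indS: "P.indep_var borel S1 borel S2"
  proof -
    let ?A = "{True} \<times> {1..N}" and ?B = "{False} \<times> {1..N}"
    have "P.indep_var (PiM ?A (\<lambda>_. borel)) (\<lambda>\<omega>. restrict (\<lambda>j. F j \<omega>) ?A)
                      (PiM ?B (\<lambda>_. borel)) (\<lambda>\<omega>. restrict (\<lambda>j. F j \<omega>) ?B)"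
      by (rule P.indep_var_restrict[OF ind]) auto
    then have "P.indep_var borel ((\<lambda>f. \<Sum>j\<in>?A. f j) \<circ> (\<lambda>\<omega>. restrict (\<lambda>j. F j \<omega>) ?A))
                           borel ((\<lambda>f. \<Sum>j\<in>?B. f j) \<circ> (\<lambda>\<omega>. restrict (\<lambda>j. F j \<omega>) ?B))"
      by (rule P.indep_var_compose) auto
    moreover have "(\<lambda>f. \<Sum>j\<in>?A. f j) \<circ> (\<lambda>\<omega>. restrict (\<lambda>j. F j \<omega>) ?A) = S1"
      by (auto simp: S1_def fun_eq_iff intro!: sum.cong)
    moreover have "(\<lambda>f. \<Sum>j\<in>?B. f j) \<circ> (\<lambda>\<omega>. restrict (\<lambda>j. F j \<omega>) ?B) = S2"
      by (auto simp: S2_def fun_eq_iff intro!: sum.cong)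
    ultimately show ?thesis by simp
  qed
  define mu where "mu = lam * 4 * (1/4) powr k * Gamma (2 * k) / (Gamma k)^2"
  have mu0: "mu \<ge> 0" using assms(4) k by (simp add: mu_def)
  have E1: "(\<integral>\<^sup>+\<omega>. ennreal \<bar>S1 \<omega> - S2 \<omega>\<bar> \<partial>P) = ennreal mu"
  proof -
    have "(\<integral>\<^sup>+\<omega>. ennreal \<bar>S1 \<omega> - S2 \<omega>\<bar> \<partial>P) =
          (\<integral>\<^sup>+x. \<integral>\<^sup>+y. ennreal (gd k lam x * gd k lam y * \<bar>x - y\<bar>) \<partial>lborel \<partial>lborel)"
      by (rule P.joint_nn[OF indS dS1 dS2, of "\<lambda>x y. \<bar>x - y\<bar>"]) (use k assms(4) in \<open>auto intro: gd_nonneg\<close>)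
    also have "\<dots> = ennreal mu" unfolding mu_def by (rule J_abs[OF assms(4) k])
    finally show ?thesis .
  qed
  have E2: "(\<integral>\<^sup>+\<omega>. ennreal ((S1 \<omega> - S2 \<omega>)^2) \<partial>P) = ennreal (2 * k * lam^2)"
  proof -
    have "(\<integral>\<^sup>+\<omega>. ennreal ((S1 \<omega> - S2 \<omega>)^2) \<partial>P) =
          (\<integral>\<^sup>+x. \<integral>\<^sup>+y. ennreal (gd k lam x * gd k lam y * (x - y)^2) \<partial>lborel \<partial>lborel)"
      by (rule P.joint_nn[OF indS dS1 dS2, of "\<lambda>x y. (x - y)^2"]) (use k assms(4) in \<open>auto intro: gd_nonneg\<close>)
    also have "\<dots> = ennreal (2 * k * lam^2)" by (rule J_sq[OF assms(4) k])
    finally show ?thesis .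
  qed
  have mS1[measurable]: "S1 \<in> borel_measurable P"
    using distributed_measurable[OF dS1] by (simp add: measurable_lborel2)
  have mS2[measurable]: "S2 \<in> borel_measurable P"
    using distributed_measurable[OF dS2] by (simp add: measurable_lborel2)
  have HB1: "has_bochner_integral P (\<lambda>\<omega>. \<bar>S1 \<omega> - S2 \<omega>\<bar>) mu"
    by (rule has_bochner_integral_nn_integral) (use mu0 E1 in auto)
  have HB2: "has_bochner_integral P (\<lambda>\<omega>. (S1 \<omega> - S2 \<omega>)^2) (2 * k * lam^2)"
    by (rule has_bochner_integral_nn_integral) (use E2 k assms(4) in auto)
  define c where "c = Xs + 1"
  have c: "c > 0" using assms(5) by (simp add: c_def Xs_def)
  have Xdiff: "Xs - Xhat \<omega> = S2 \<omega> - S1 \<omega>" for \<omega>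
    by (simp add: Xhat_def Xs_def S1_alt S2_alt sum.distrib sum_subtractf)
  have Yeq: "(\<lambda>\<omega>. \<bar>Xs - Xhat \<omega>\<bar> / (Xs + 1)) = (\<lambda>\<omega>. \<bar>S1 \<omega> - S2 \<omega>\<bar> / c)"
    by (simp add: Xdiff c_def abs_minus_commute)
  have Ypt: "\<bar>Xs - Xhat \<omega>\<bar> / (Xs + 1) = \<bar>S1 \<omega> - S2 \<omega>\<bar> / c" for \<omega>
    by (simp add: Xdiff c_def abs_minus_commute)
  have HY: "has_bochner_integral P (\<lambda>\<omega>. \<bar>S1 \<omega> - S2 \<omega>\<bar> / c) (mu / c)"
    using HB1 by (rule has_bochner_integral_divide_zero)
  have Y2eq: "(\<lambda>\<omega>. (\<bar>S1 \<omega> - S2 \<omega>\<bar> / c)^2) = (\<lambda>\<omega>. (S1 \<omega> - S2 \<omega>)^2 / c^2)"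
    by (simp add: power_divide)
  have HY2: "has_bochner_integral P (\<lambda>\<omega>. (\<bar>S1 \<omega> - S2 \<omega>\<bar> / c)^2) (2 * k * lam^2 / c^2)"
    unfolding Y2eq using HB2 by (rule has_bochner_integral_divide_zero)
  have EY: "P.expectation (\<lambda>\<omega>. \<bar>S1 \<omega> - S2 \<omega>\<bar> / c) = mu / c"
    using HY by (rule has_bochner_integral_integral_eq)
  have EY2: "P.expectation (\<lambda>\<omega>. (\<bar>S1 \<omega> - S2 \<omega>\<bar> / c)^2) = 2 * k * lam^2 / c^2"
    using HY2 by (rule has_bochner_integral_integral_eq)
  have VY: "P.variance (\<lambda>\<omega>. \<bar>S1 \<omega> - S2 \<omega>\<bar> / c) = 2 * k * lam^2 / c^2 - (mu / c)^2"
    using P.variance_eq[OF integrable.intros[OF HY] integrable.intros[OF HY2]]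
      EY EY2 c by simp
  have alk: "1 / (1 - \<alpha>) = k"
  proof -
    have "real N > 0" using assms(2) by simp
    moreover have "n0 = real N - real M" using assms(3) by (simp add: n0_def of_nat_diff)
    ultimately show ?thesis using n0 by (simp add: \<alpha>_def k_def field_simps)
  qed
  have al2: "2 / (1 - \<alpha>) = 2 * k" using alk by (simp add: divide_inverse)
  define B where "B = Beta (1/2) k"
  have "mu = lam * (4 * (1/4) powr k * Gamma (2 * k) / (Gamma k)^2)" by (simp add: mu_def)
  also have "\<dots> = lam * (2 / B)" unfolding beta_identity[OF k] B_def ..
  finally have muB: "mu = 2 / B * lam" by simp
  have conj1: "P.expectation (\<lambda>\<omega>. \<bar>Xs - Xhat \<omega>\<bar> / (Xs + 1)) = 2 / Beta (1/2) (1 / (1 - \<alpha>)) * (lam / (Xs + 1))"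
    unfolding Yeq EY unfolding alk muB B_def c_def by simp
  have "2 * k * lam^2 / c^2 - (mu / c)^2 = (2 * k - 4 / B^2) * (lam / c)^2"
  proof -
    have B0: "B > 0" using k by (simp add: B_def Beta_def)
    show ?thesis unfolding muB using c B0 by (simp add: power_divide field_simps)
  qed
  then have conj2: "sqrt (P.variance (\<lambda>\<omega>. \<bar>Xs - Xhat \<omega>\<bar> / (Xs + 1))) =
      sqrt (2 / (1 - \<alpha>) - 4 / (Beta (1/2) (1 / (1 - \<alpha>)))\<^sup>2) * (lam / (Xs + 1))"
    unfolding Ypt unfolding VY unfolding al2 alk using c assms(4)
    by (simp add: real_sqrt_mult B_def c_def)
  show ?thesis using conj1 conj2 by simp
qed

end
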